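(* Let $1\leqslant\xi<\omega_1$, let $(x_k)_k$ be a bounded block sequence in $\mathfrak{X}_{0,1}^{\omega^\xi}$, and let $(y_k)_k$ be a block sequence of $(x_k)_k$ such that each $y_k=\sum_{i\in F_k}c_ix_i$ is a $(\xi_{k+1},\xi_k,\varepsilon_k)$ special convex combination, where $\lim_k\varepsilon_k=0$. Then $\alpha_{<\omega^\xi}((y_j)_j)=0$.
   Context: Schreier families: $\mathcal{S}_0=\{\varnothing\}\cup\{\{n\}\}$, $\mathcal{S}_1=\{E:|E|\leqslant\min E\}$, $\mathcal{S}_{\zeta+1}=\{\bigcup_{i=1}^nE_i:E_1<\dots<E_n,E_i\in\mathcal{S}_\zeta,n\leqslant\min E_1\}$, and for a countable limit ordinal $\zeta$ a sequence $\zeta_n\uparrow\zeta$ is fixed with $\mathcal{S}_{\zeta_n}\subset\mathcal{S}_{\zeta_{n+1}}$, $\mathcal{S}_\zeta=\{E:\exists n,\ n\leqslant\min E,\ E\in\mathcal{S}_{\zeta_n}\}$; $(\xi_n)$ denotes the sequence with $\xi_n\uparrow\omega^\xi$ used for $\mathcal{S}_{\omega^\xi}$. The space: for $G\subset c_{00}$, $\alpha=\frac1\ell\sum_{q=1}^df_q$ with $f_1<\dots<f_d\in G$ (successive supports), $d\leqslant\ell$, $\ell\geqslant2$, is an $\alpha$-average of size $s(\alpha)=\ell$. A sequence $\alpha_1<\dots<\alpha_d$ of $\alpha$-averages is $\mathcal{F}$-admissible if $\{\min\mathrm{supp}\,\alpha_q\}_q\in\mathcal{F}$; a sequence $\alpha_1<\alpha_2<\cdots$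 is very fast growing if $s(\alpha_1)<s(\alpha_2)<\cdots$ and $s(\alpha_q)>\max\mathrm{supp}\,\alpha_{q-1}$ for $q>1$. $W_0=\{\pm e_n\}$, $W_{m+1}=W_m\cup\{\frac1\ell\sum_{q=1}^df_q:f_1<\dots<f_d\in W_m,2\leqslant\ell,d\leqslant\ell\}\cup\{\sum_{q=1}^d\alpha_q:(\alpha_q)\subset W_m$ $\mathcal{S}_{\omega^\xi}$-admissible, very fast growing $\alpha$-averages$\}$, $W=\bigcup_mW_m$; $\|x\|=\sup_{f\in W}\sum_if(i)x(i)$, and $\mathfrak{X}_{0,1}^{\omega^\xi}$ is the completion of $c_{00}$ under this norm. Index: for a block sequence $(x_k)$, $\alpha_{<\omega^\xi}((x_k))=0$ if for every $n$, every very fast growing sequence $(\alpha_q)_{q\in\mathbb{N}}$ of $\alpha$-averages in $W$, every sequence $F_1<F_2<\cdots$ of finite sets with $(\alpha_q)_{q\in F_k}$ $\mathcal{S}_{\xi_n}$-admissible for each $k$, and every subsequence $(x_{n_k})$, $\lim_k\sum_{q\in F_k}|\alpha_q(x_{n_k})|=0$. Special convex combinations: for ordinals $\zeta<\eta$ and $\varepsilon>0$, $\sum_{i\in F}c_ie_i$ is a $(\eta,\zeta,\varepsilon)$ basic s.c.c. if $c_i\geqslant0$, $\sum_{i\in F}c_i=1$, $F\in\mathcal{S}_\eta$, and $\sum_{i\in G\cap F}c_i<\varepsilon$ for every $G\in\mathcal{S}_\zeta$. For a block sequence $(x_k)_{k=1}^m$ and $c_k\geqslant0$, with $\phi_k=\min\mathrm{supp}\,x_k$,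 the vector $\sum_kc_kx_k$ is a $(\eta,\zeta,\varepsilon)$ special convex combination if $\sum_kc_ke_{\phi_k}$ is a $(\eta,\zeta,\varepsilon)$ basic s.c.c. *)

theory Defs
  imports Complex_Main
begin

text \<open>A tree OL f denotes the supremum of the ordinals denoted by f 0, f 1, ...;
  the sequence f is the fixed sequence (paper: zeta_1, zeta_2, ...) used in the
  definition of the Schreier family of a limit ordinal.\<close>

datatype ord = OZ | OS ord | OL "nat \<Rightarrow> ord"

inductive ole :: "ord \<Rightarrow> ord \<Rightarrow> bool" and olt :: "ord \<Rightarrow> ord \<Rightarrow> bool" where
  ole_zero: "ole OZ y"
| ole_succ: "olt x y \<Longrightarrow> ole (OS x) y"
| ole_lim: "(\<And>n. ole (f n) y) \<Longrightarrow> ole (OL f) y"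
| olt_succ: "ole x y \<Longrightarrow> olt x (OS y)"
| olt_lim: "olt x (g n) \<Longrightarrow> olt x (OL g)"

definition oeq :: "ord \<Rightarrow> ord \<Rightarrow> bool" where
  "oeq a b \<longleftrightarrow> ole a b \<and> ole b a"

primrec oadd :: "ord \<Rightarrow> ord \<Rightarrow> ord" where
  "oadd a OZ = a"
| "oadd a (OS b) = OS (oadd a b)"
| "oadd a (OL g) = OL (\<lambda>n. oadd a (g n))"

primrec omul_nat :: "ord \<Rightarrow> nat \<Rightarrow> ord" where
  "omul_nat a 0 = OZ"
| "omul_nat a (Suc n) = oadd (omul_nat a n) a"

text \<open>oexpw b denotes omega to the power b.\<close>
primrec oexpw :: "ord \<Rightarrow> ord" where
  "oexpw OZ = OS OZ"
| "oexpw (OS b) = OL (\<lambda>n. omul_nat (oexpw b) n)"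
| "oexpw (OL g) = OL (\<lambda>n. oexpw (g n))"

definition setless :: "nat set \<Rightarrow> nat set \<Rightarrow> bool" where
  "setless A B \<longleftrightarrow> (\<forall>a\<in>A. \<forall>b\<in>B. a < b)"

primrec schreier :: "ord \<Rightarrow> nat set set" where
  "schreier OZ = {E. E = {} \<or> (\<exists>n\<ge>1. E = {n})}"
| "schreier (OS z) = {E. E = {} \<or> (\<exists>Es. Es \<noteq> [] \<and> E = \<Union>(set Es)
      \<and> (\<forall>e\<in>set Es. e \<in> schreier z \<and> e \<noteq> {})
      \<and> sorted_wrt setless Es \<and> length Es \<le> Min (hd Es))}"
| "schreier (OL f) = {E. \<exists>n. E \<in> schreier (f n) \<and> (E = {} \<or> Suc n \<le> Min E)}"

primrec valid :: "ord \<Rightarrow> bool" where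
  "valid OZ = True"
| "valid (OS z) = valid z"
| "valid (OL f) = ((\<forall>n. valid (f n)) \<and> (\<forall>n. olt (f n) (f (Suc n)))
      \<and> (\<forall>n. schreier (f n) \<subseteq> schreier (f (Suc n))))"

text \<open>Vectors of c00 are functions nat => real; coordinates are indexed by positive naturals.\<close>

definition supp :: "(nat \<Rightarrow> real) \<Rightarrow> nat set" where
  "supp f = {i. f i \<noteq> 0}"

definition blk :: "(nat \<Rightarrow> real) \<Rightarrow> (nat \<Rightarrow> real) \<Rightarrow> bool" where
  "blk f g \<longleftrightarrow> setless (supp f) (supp g)"

definition avg_ok :: "(nat \<Rightarrow> real) list \<Rightarrow> nat \<Rightarrow> bool" where
  "avg_ok fs l \<longleftrightarrow> fs \<noteq> [] \<and> sorted_wrt blk fs \<and> 2 \<le> l \<and> length fs \<le> l"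

definition avgvec :: "(nat \<Rightarrow> real) list \<Rightarrow> nat \<Rightarrow> (nat \<Rightarrow> real)" where
  "avgvec fs l = (\<lambda>i. (\<Sum>f\<leftarrow>fs. f i) / real l)"

text \<open>Norming set W; SF is the family S_{omega^xi}.\<close>
inductive_set Wset :: "nat set set \<Rightarrow> (nat \<Rightarrow> real) set" for SF where
  unit: "1 \<le> n \<Longrightarrow> s = 1 \<or> s = -1 \<Longrightarrow> (\<lambda>i. if i = n then s else 0) \<in> Wset SF"
| average: "avg_ok fs l \<Longrightarrow> \<forall>f\<in>set fs. f \<in> Wset SF \<Longrightarrow> avgvec fs l \<in> Wset SF"
| vfgsum: "ps \<noteq> [] \<Longrightarrow>
     \<forall>p\<in>set ps. avg_ok (fst p) (snd p) \<and> (\<forall>f\<in>set (fst p). f \<in> Wset SF) \<Longrightarrow>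
     sorted_wrt blk (map (\<lambda>p. avgvec (fst p) (snd p)) ps) \<Longrightarrow>
     set (map (\<lambda>p. Min (supp (avgvec (fst p) (snd p)))) ps) \<in> SF \<Longrightarrow>
     \<forall>q. Suc q < length ps \<longrightarrow> snd (ps ! q) < snd (ps ! Suc q)
          \<and> Max (supp (avgvec (fst (ps ! q)) (snd (ps ! q)))) < snd (ps ! Suc q) \<Longrightarrow>
     (\<lambda>i. \<Sum>p\<leftarrow>ps. avgvec (fst p) (snd p) i) \<in> Wset SF"

definition pair :: "(nat \<Rightarrow> real) \<Rightarrow> (nat \<Rightarrow> real) \<Rightarrow> real" where
  "pair f x = (\<Sum>i\<in>supp x. f i * x i)"

definition xnorm :: "(nat \<Rightarrow> real) set \<Rightarrow> (nat \<Rightarrow> real) \<Rightarrow> real" where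
  "xnorm W x = Sup ((\<lambda>f. pair f x) ` W)"

definition blockseq :: "(nat \<Rightarrow> nat \<Rightarrow> real) \<Rightarrow> bool" where
  "blockseq x \<longleftrightarrow> (\<forall>k. finite (supp (x k)) \<and> supp (x k) \<noteq> {} \<and> 0 \<notin> supp (x k)
      \<and> setless (supp (x k)) (supp (x (Suc k))))"

definition avg_in :: "(nat \<Rightarrow> real) set \<Rightarrow> (nat \<Rightarrow> real) \<Rightarrow> nat \<Rightarrow> bool" where
  "avg_in W a l \<longleftrightarrow> (\<exists>fs. avg_ok fs l \<and> set fs \<subseteq> W \<and> a = avgvec fs l)"

definition vfg :: "(nat \<Rightarrow> real) set \<Rightarrow> (nat \<Rightarrow> nat \<Rightarrow> real) \<Rightarrow> (nat \<Rightarrow> nat) \<Rightarrow> bool" where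
  "vfg W a s \<longleftrightarrow> (\<forall>q. avg_in W (a q) (s q)) \<and> (\<forall>q. blk (a q) (a (Suc q)))
      \<and> strict_mono s \<and> (\<forall>q. Max (supp (a q)) < s (Suc q))"

text \<open>alpha_{<omega^xi}((y_k)) = 0, where xs is the sequence xi_n (xs 0 = xi_1).\<close>
definition alpha_index_zero :: "(nat \<Rightarrow> real) set \<Rightarrow> (nat \<Rightarrow> ord) \<Rightarrow> (nat \<Rightarrow> nat \<Rightarrow> real) \<Rightarrow> bool" where
  "alpha_index_zero W xs y \<longleftrightarrow>
    (\<forall>n a s F m. vfg W a s \<and> (\<forall>k. finite (F k)) \<and> (\<forall>k l. k < l \<longrightarrow> setless (F k) (F l))
       \<and> (\<forall>k. (\<lambda>q. Min (supp (a q))) ` F k \<in> schreier (xs n)) \<and> strict_mono m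
     \<longrightarrow> (\<lambda>k. \<Sum>q\<in>F k. \<bar>pair (a q) (y (m k))\<bar>) \<longlonglongrightarrow> 0)"

definition basic_scc :: "nat set set \<Rightarrow> nat set set \<Rightarrow> real \<Rightarrow> nat set \<Rightarrow> (nat \<Rightarrow> real) \<Rightarrow> bool" where
  "basic_scc S\<eta> S\<zeta> \<epsilon> F c \<longleftrightarrow> (\<forall>i\<in>F. c i \<ge> 0) \<and> sum c F = 1 \<and> F \<in> S\<eta>
      \<and> (\<forall>G\<in>S\<zeta>. sum c (G \<inter> F) < \<epsilon>)"

text \<open>sum_{k in F} c_k x_k is an s.c.c. iff sum_k c_k e_{phi_k} is a basic s.c.c.,
  phi_k = min supp x_k.\<close>
definition scc :: "nat set set \<Rightarrow> nat set set \<Rightarrow> real \<Rightarrow> (nat \<Rightarrow> nat \<Rightarrow> real) \<Rightarrow> nat set \<Rightarrow> (nat \<Rightarrow> real) \<Rightarrow> bool" where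
  "scc S\<eta> S\<zeta> \<epsilon> x F c \<longleftrightarrow> (\<forall>k\<in>F. c k \<ge> 0) \<and>
     basic_scc S\<eta> S\<zeta> \<epsilon> ((\<lambda>k. Min (supp (x k))) ` F)
       (\<lambda>j. \<Sum>k\<in>{k\<in>F. Min (supp (x k)) = j}. c k)"

end

theory Submission
  imports Defs
begin


definition props :: "(nat \<Rightarrow> real) \<Rightarrow> bool" where
  "props f \<longleftrightarrow> (\<forall>i. \<bar>f i\<bar> \<le> 1) \<and> finite (supp f) \<and> supp f \<noteq> {}"

lemma blk_sum_one:
  assumes "sorted_wrt blk gs" "g \<in> set gs" "g p \<noteq> 0"
  shows "(\<Sum>g'\<leftarrow>gs. g' p) = g p"
  using assms
proof (induction gs)
  case Nil then show ?case by simp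
next
  case (Cons h gs)
  show ?case
  proof (cases "g = h")
    case True
    have "\<forall>g'\<in>set gs. g' p = 0"
    proof
      fix g' assume "g' \<in> set gs"
      with Cons.prems(1) have "blk h g'" by simp
      with Cons.prems(3) True show "g' p = 0"
        unfolding blk_def setless_def supp_def by auto
    qed
    then have "(\<Sum>g'\<leftarrow>gs. g' p) = 0" by (induction gs) auto
    then show ?thesis using True by simp
  next
    case False
    then have "g \<in> set gs" using Cons.prems by simp
    with Cons.prems have "blk h g" by simp
    with Cons.prems(3) have "h p = 0"
      unfolding blk_def setless_def supp_def by auto
    with Cons.IH[OF _ \<open>g \<in> set gs\<close> Cons.prems(3)] Cons.prems(1) show ?thesis by simp
  qed
qed

lemma blk_sum_cases:
  assumes "sorted_wrt blk gs"
  shows "(\<Sum>g'\<leftarrow>gs. g' p) = 0 \<or> (\<exists>g\<in>set gs. (\<Sum>g'\<leftarrow>gs. g' p) = g p)"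
proof (cases "\<exists>g\<in>set gs. g p \<noteq> 0")
  case True
  then obtain g where "g \<in> set gs" "g p \<noteq> 0" by blast
  with blk_sum_one[OF assms this] show ?thesis by blast
next
  case False
  then have "\<forall>g\<in>set gs. g p = 0" by blast
  then have "(\<Sum>g'\<leftarrow>gs. g' p) = 0" by (induction gs) auto
  then show ?thesis by simp
qed

lemma sum_props:
  assumes "gs \<noteq> []" "sorted_wrt blk gs" "\<forall>g\<in>set gs. props g"
  shows "props (\<lambda>i. \<Sum>g\<leftarrow>gs. g i)"
proof -
  have b: "\<bar>\<Sum>g\<leftarrow>gs. g i\<bar> \<le> 1" for i
  proof (cases "(\<Sum>g\<leftarrow>gs. g i) = 0")
    case True then show ?thesis by simp
  next
    case False
    then obtain g where "g \<in> set gs" "(\<Sum>g\<leftarrow>gs. g i) = g i"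
      using blk_sum_cases[OF assms(2), of i] by blast
    moreover have "props g" using assms(3) \<open>g \<in> set gs\<close> by blast
    ultimately show ?thesis unfolding props_def by metis
  qed
  have "supp (\<lambda>i. \<Sum>g\<leftarrow>gs. g i) \<subseteq> (\<Union>g\<in>set gs. supp g)"
  proof
    fix i assume "i \<in> supp (\<lambda>i. \<Sum>g\<leftarrow>gs. g i)"
    then have "(\<Sum>g\<leftarrow>gs. g i) \<noteq> 0" unfolding supp_def by simp
    then obtain g where "g \<in> set gs" "g i \<noteq> 0"
      using blk_sum_cases[OF assms(2), of i] by auto
    then show "i \<in> (\<Union>g\<in>set gs. supp g)" unfolding supp_def by auto
  qed
  moreover have "finite (\<Union>g\<in>set gs. supp g)" using assms(3) unfolding props_def by auto
  ultimately have f: "finite (supp (\<lambda>i. \<Sum>g\<leftarrow>gs. g i))" by (rule finite_subset)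
  obtain h where h: "h \<in> set gs" using assms(1) by (cases gs) auto
  then obtain p where "p \<in> supp h" using assms(3) unfolding props_def by auto
  then have "h p \<noteq> 0" unfolding supp_def by simp
  with blk_sum_one[OF assms(2) h this] have "p \<in> supp (\<lambda>i. \<Sum>g\<leftarrow>gs. g i)"
    unfolding supp_def by simp
  with b f show ?thesis unfolding props_def by blast
qed

lemma avgvec_alt: "avgvec fs l = (\<lambda>i. (\<Sum>g\<leftarrow>fs. g i) / real l)"
  unfolding avgvec_def by simp

lemma avg_props:
  assumes "avg_ok fs l" "\<forall>f\<in>set fs. props f"
  shows "props (avgvec fs l)"
proof -
  have P: "props (\<lambda>i. \<Sum>g\<leftarrow>fs. g i)" using sum_props assms unfolding avg_ok_def by blast
  have l: "real l \<ge> 2" using assms(1) unfolding avg_ok_def by simp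
  have s: "supp (avgvec fs l) = supp (\<lambda>i. \<Sum>g\<leftarrow>fs. g i)"
    using l unfolding supp_def avgvec_def by simp
  have "\<bar>avgvec fs l i\<bar> \<le> 1" for i
  proof -
    have "\<bar>\<Sum>g\<leftarrow>fs. g i\<bar> \<le> 1" using P unfolding props_def by blast
    moreover have "\<bar>avgvec fs l i\<bar> = \<bar>\<Sum>g\<leftarrow>fs. g i\<bar> / real l"
      using l unfolding avgvec_def by simp
    ultimately show ?thesis using l by (simp add: divide_le_eq)
  qed
  with P s show ?thesis unfolding props_def by auto
qed

lemma W_props: "f \<in> Wset SF \<Longrightarrow> props f"
proof (induction rule: Wset.induct)
  case (unit n s)
  have "supp (\<lambda>i. if i = n then s else 0) = {n}" using unit unfolding supp_def by auto
  then show ?case using unit unfolding props_def by auto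
next
  case (average fs l)
  then show ?case using avg_props by blast
next
  case (vfgsum ps)
  have eq: "(\<lambda>i. \<Sum>p\<leftarrow>ps. avgvec (fst p) (snd p) i) =
     (\<lambda>i. \<Sum>g\<leftarrow>map (\<lambda>p. avgvec (fst p) (snd p)) ps. g i)"
    by (simp add: comp_def)
  have "\<forall>g\<in>set (map (\<lambda>p. avgvec (fst p) (snd p)) ps). props g"
  proof
    fix g assume "g \<in> set (map (\<lambda>p. avgvec (fst p) (snd p)) ps)"
    then obtain p where p: "p \<in> set ps" "g = avgvec (fst p) (snd p)" by auto
    from vfgsum.IH p(1) have "avg_ok (fst p) (snd p)" "\<forall>f\<in>set (fst p). props f" by blast+
    then show "props g" using avg_props p(2) by blast
  qed
  then have "props (\<lambda>i. \<Sum>g\<leftarrow>map (\<lambda>p. avgvec (fst p) (snd p)) ps. g i)"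
    using sum_props[of "map (\<lambda>p. avgvec (fst p) (snd p)) ps"] vfgsum.hyps(1) vfgsum.hyps(2) by simp
  then show ?case by (simp only: eq)
qed

definition negf :: "(nat \<Rightarrow> real) \<Rightarrow> (nat \<Rightarrow> real)" where
  "negf f = (\<lambda>i. - f i)"

lemma supp_negf[simp]: "supp (negf f) = supp f"
  unfolding supp_def negf_def by simp

lemma blk_negf[simp]: "blk (negf f) g = blk f g" "blk f (negf g) = blk f g"
  unfolding blk_def by simp_all

lemma sorted_blk_negf: "sorted_wrt blk (map negf fs) = sorted_wrt blk fs"
  by (simp add: sorted_wrt_map)

lemma avg_ok_negf: "avg_ok (map negf fs) l = avg_ok fs l"
  unfolding avg_ok_def by (simp add: sorted_blk_negf)

lemma sum_list_negf: "(\<Sum>g\<leftarrow>map negf fs. g i) = - (\<Sum>g\<leftarrow>fs. g i)"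
  by (induction fs) (auto simp: negf_def)

lemma avgvec_negf: "avgvec (map negf fs) l = negf (avgvec fs l)"
proof (rule ext)
  fix i
  have "avgvec (map negf fs) l i = (\<Sum>g\<leftarrow>map negf fs. g i) / real l" by (simp only: avgvec_def)
  also have "\<dots> = - (\<Sum>g\<leftarrow>fs. g i) / real l" by (simp only: sum_list_negf)
  also have "\<dots> = negf (avgvec fs l) i" by (simp add: negf_def avgvec_def)
  finally show "avgvec (map negf fs) l i = negf (avgvec fs l) i" .
qed

lemma avgvec_negf_pt: "avgvec (map negf fs) l i = - avgvec fs l i"
  by (simp add: avgvec_negf negf_def)

lemma W_negf: "f \<in> Wset SF \<Longrightarrow> negf f \<in> Wset SF"
proof (induction rule: Wset.induct)
  case (unit n s)
  have "negf (\<lambda>i. if i = n then s else 0) = (\<lambda>i. if i = n then -s else 0)"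
    unfolding negf_def by auto
  then show ?case using unit Wset.unit[of n "-s"] by auto
next
  case (average fs l)
  have "avgvec (map negf fs) l \<in> Wset SF"
    by (rule Wset.average) (use average in \<open>auto simp: avg_ok_negf\<close>)
  then show ?case by (simp add: avgvec_negf)
next
  case (vfgsum ps)
  define ps' where "ps' = map (\<lambda>p. (map negf (fst p), snd p)) ps"
  have av: "avgvec (fst p') (snd p') = negf (avgvec (fst p) (snd p))" if "p' = (map negf (fst p), snd p)" for p p'
    using that by (simp add: avgvec_negf)
  have m1: "map (\<lambda>p. avgvec (fst p) (snd p)) ps' = map negf (map (\<lambda>p. avgvec (fst p) (snd p)) ps)"
    unfolding ps'_def by (simp add: avgvec_negf)
  have "(\<lambda>i. \<Sum>p\<leftarrow>ps'. avgvec (fst p) (snd p) i) \<in> Wset SF"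
  proof (rule Wset.vfgsum)
    show "ps' \<noteq> []" using vfgsum.hyps(1) unfolding ps'_def by simp
    show "\<forall>p\<in>set ps'. avg_ok (fst p) (snd p) \<and> (\<forall>f\<in>set (fst p). f \<in> Wset SF)"
    proof
      fix p assume "p \<in> set ps'"
      then obtain p0 where p0: "p0 \<in> set ps" "p = (map negf (fst p0), snd p0)" unfolding ps'_def by auto
      then show "avg_ok (fst p) (snd p) \<and> (\<forall>f\<in>set (fst p). f \<in> Wset SF)"
        using vfgsum.IH by (auto simp: avg_ok_negf)
    qed
    show "sorted_wrt blk (map (\<lambda>p. avgvec (fst p) (snd p)) ps')"
      unfolding m1 sorted_blk_negf using vfgsum.hyps(2) .
    show "set (map (\<lambda>p. Min (supp (avgvec (fst p) (snd p)))) ps') \<in> SF"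
      using vfgsum.hyps(3) unfolding ps'_def by (simp add: avgvec_negf comp_def)
    show "\<forall>q. Suc q < length ps' \<longrightarrow> snd (ps' ! q) < snd (ps' ! Suc q) \<and>
          Max (supp (avgvec (fst (ps' ! q)) (snd (ps' ! q)))) < snd (ps' ! Suc q)"
      using vfgsum.hyps(4) unfolding ps'_def by (simp add: avgvec_negf)
  qed
  moreover have "(\<lambda>i. \<Sum>p\<leftarrow>ps'. avgvec (fst p) (snd p) i) = negf (\<lambda>i. \<Sum>p\<leftarrow>ps. avgvec (fst p) (snd p) i)"
  proof -
    have "(\<Sum>p\<leftarrow>ps'. avgvec (fst p) (snd p) i) = - (\<Sum>p\<leftarrow>ps. avgvec (fst p) (snd p) i)" for i
      unfolding ps'_def by (induction ps) (simp_all add: avgvec_negf_pt)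
    then show ?thesis unfolding negf_def by auto
  qed
  ultimately show ?case by simp
qed



lemma sch_finite: "E \<in> schreier z \<Longrightarrow> finite E"
proof (induction z arbitrary: E)
  case OZ then show ?case by auto
next
  case (OS z)
  then show ?case by auto
next
  case (OL f)
  then show ?case by auto
qed

lemma sch_single: "1 \<le> p \<Longrightarrow> {p} \<in> schreier z"
proof (induction z)
  case OZ then show ?case by auto
next
  case (OS z)
  have "{p} = \<Union>(set [{p}])" by simp
  then show ?case using OS by (auto intro!: exI[of _ "[{p}]"])
next
  case (OL f)
  then show ?case by (auto intro!: exI[of _ 0])
qed

lemma sch_dom:
  assumes "E \<in> schreier z" "finite P" "\<forall>p\<in>P. \<psi> p \<in> E \<and> \<psi> p \<le> p"
    "\<forall>p\<in>P. \<forall>p'\<in>P. p < p' \<longrightarrow> \<psi> p < \<psi> p'"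
  shows "P \<in> schreier z"
  using assms
proof (induction z arbitrary: E P)
  case OZ
  show ?case
  proof (cases "P = {}")
    case True then show ?thesis by simp
  next
    case False
    then obtain p where p: "p \<in> P" by blast
    from OZ.prems(1) p OZ.prems(3) obtain n where n: "n \<ge> 1" "E = {n}" by auto
    have "P = {p}"
    proof
      show "P \<subseteq> {p}"
      proof
        fix p' assume p': "p' \<in> P"
        have "\<psi> p = n" "\<psi> p' = n" using p p' OZ.prems(3) n by auto
        then show "p' \<in> {p}" using OZ.prems(4) p p' by (metis less_irrefl linorder_neqE_nat singletonI)
      qed
    qed (use p in auto)
    moreover have "p \<ge> 1" using OZ.prems(3) p n by force
    ultimately show ?thesis by auto
  qed
next
  case (OS z)
  show ?case
  proof (cases "P = {}")
    case True then show ?thesis by simp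
  next
    case False
    then obtain p0 where p0: "p0 \<in> P" by blast
    then have "E \<noteq> {}" using OS.prems(3) by auto
    with OS.prems(1) obtain Es where Es: "Es \<noteq> []" "E = \<Union>(set Es)"
       "\<forall>e\<in>set Es. e \<in> schreier z \<and> e \<noteq> {}" "sorted_wrt setless Es" "length Es \<le> Min (hd Es)"
      by auto
    define h where "h e = {p\<in>P. \<psi> p \<in> e}" for e
    define Ps where "Ps = filter (\<lambda>S. S \<noteq> {}) (map h Es)"
    have fin: "finite e" if "e \<in> set Es" for e using Es(3) that sch_finite by blast
    have Pu: "P = \<Union>(set Ps)"
    proof
      show "P \<subseteq> \<Union>(set Ps)"
      proof
        fix p assume "p \<in> P"
        then have "\<psi> p \<in> E" using OS.prems(3) by blast
        then obtain e where "e \<in> set Es" "\<psi> p \<in> e" using Es(2) by blast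
        then have "p \<in> h e" "h e \<in> set Ps" using \<open>p \<in> P\<close> unfolding h_def Ps_def by auto
        then show "p \<in> \<Union>(set Ps)" by blast
      qed
      show "\<Union>(set Ps) \<subseteq> P" unfolding Ps_def h_def by auto
    qed
    have Psne: "Ps \<noteq> []" using Pu False by auto
    have Psin: "\<forall>S\<in>set Ps. S \<in> schreier z \<and> S \<noteq> {}"
    proof
      fix S assume "S \<in> set Ps"
      then obtain e where e: "e \<in> set Es" "S = h e" "S \<noteq> {}" unfolding Ps_def by auto
      have "S \<in> schreier z"
      proof (rule OS.IH[of e])
        show "e \<in> schreier z" using Es(3) e by blast
        show "finite S" using e OS.prems(2) unfolding h_def by auto
        show "\<forall>p\<in>S. \<psi> p \<in> e \<and> \<psi> p \<le> p" using e OS.prems(3) unfolding h_def by auto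
        show "\<forall>p\<in>S. \<forall>p'\<in>S. p < p' \<longrightarrow> \<psi> p < \<psi> p'" using e OS.prems(4) unfolding h_def by auto
      qed
      with e show "S \<in> schreier z \<and> S \<noteq> {}" by blast
    qed
    have hsl: "setless (h e) (h e')" if "setless e e'" for e e'
      unfolding setless_def
    proof (intro ballI)
      fix p p' assume "p \<in> h e" "p' \<in> h e'"
      then have "p \<in> P" "p' \<in> P" "\<psi> p \<in> e" "\<psi> p' \<in> e'" unfolding h_def by auto
      then have "\<psi> p < \<psi> p'" using that unfolding setless_def by blast
      then show "p < p'" using OS.prems(4) \<open>p \<in> P\<close> \<open>p' \<in> P\<close>
        by (metis less_asym linorder_neqE_nat)
    qed
    have "sorted_wrt setless (map h Es)"
      unfolding sorted_wrt_map
      by (rule sorted_wrt_mono_rel[OF _ Es(4)]) (rule hsl)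
    then have sorted: "sorted_wrt setless Ps"
      unfolding Ps_def by (rule sorted_wrt_filter)
    have len: "length Ps \<le> length Es" unfolding Ps_def by (metis length_filter_le length_map)
    obtain e0 where e0: "e0 \<in> set Es" "hd Ps = h e0" "h e0 \<noteq> {}"
    proof -
      have "hd Ps \<in> set Ps" using Psne by simp
      then show ?thesis using that unfolding Ps_def by auto
    qed
    have "Min (hd Es) \<le> Min e0"
    proof (cases "e0 = hd Es")
      case True then show ?thesis by simp
    next
      case False
      have "hd Es \<in> set Es" using Es(1) by simp
      have "e0 \<in> set (tl Es)" using e0(1) False Es(1) by (cases Es) auto
      then have "setless (hd Es) e0" using Es(4) Es(1) by (cases Es) auto
      moreover have "hd Es \<noteq> {}" "e0 \<noteq> {}" using Es(3) e0(1) \<open>hd Es \<in> set Es\<close> by auto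
      moreover have "finite (hd Es)" "finite e0" using fin e0(1) \<open>hd Es \<in> set Es\<close> by auto
      ultimately show ?thesis unfolding setless_def by (meson Min_in less_imp_le)
    qed
    moreover have "Min e0 \<le> Min (h e0)"
    proof -
      have "finite (h e0)" using OS.prems(2) unfolding h_def by auto
      then have "Min (h e0) \<in> h e0" using e0(3) by (rule Min_in)
      then have "\<psi> (Min (h e0)) \<in> e0" "\<psi> (Min (h e0)) \<le> Min (h e0)"
        using OS.prems(3) unfolding h_def by auto
      then show ?thesis using fin[OF e0(1)] by (meson Min_le order_trans)
    qed
    ultimately have "length Ps \<le> Min (hd Ps)" using len Es(5) unfolding e0(2) by linarith
    then show ?thesis using Pu Psne Psin sorted by auto
  qed
next
  case (OL f)
  from OL.prems(1) obtain n where n: "E \<in> schreier (f n)" "E = {} \<or> Suc n \<le> Min E" by auto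
  have "P \<in> schreier (f n)"
    by (rule OL.IH[of "f n" E]) (use n OL.prems in auto)
  moreover have "P = {} \<or> Suc n \<le> Min P"
  proof (cases "P = {}")
    case False
    then have "Min P \<in> P" using OL.prems(2) by simp
    then have "\<psi> (Min P) \<in> E" "\<psi> (Min P) \<le> Min P" using OL.prems(3) by auto
    moreover then have "E \<noteq> {}" by auto
    ultimately have "Min E \<le> Min P" using sch_finite[OF n(1)] by (meson Min_le order_trans)
    then show ?thesis using n(2) \<open>E \<noteq> {}\<close> by simp
  qed simp
  ultimately show ?case by auto
qed

lemma sch_chain:
  assumes "valid (OL xs)" "n \<le> j"
  shows "schreier (xs n) \<subseteq> schreier (xs j)"
  using assms(2)
proof (induction j)
  case 0 then show ?case by simp
next
  case (Suc j)
  show ?case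
  proof (cases "n = Suc j")
    case False
    then have "n \<le> j" using Suc.prems by simp
    with Suc.IH have "schreier (xs n) \<subseteq> schreier (xs j)" by simp
    also have "\<dots> \<subseteq> schreier (xs (Suc j))" using assms(1) by simp
    finally show ?thesis .
  qed simp
qed



lemma pair_eq: "finite S \<Longrightarrow> supp x \<subseteq> S \<Longrightarrow> pair f x = (\<Sum>i\<in>S. f i * x i)"
  unfolding pair_def by (rule sum.mono_neutral_left) (auto simp: supp_def)

lemma pair_zero: "supp f \<inter> supp x = {} \<Longrightarrow> pair f x = 0"
  unfolding pair_def by (rule sum.neutral) (auto simp: supp_def)

lemma pair_lin_f:
  assumes "finite (supp x)"
  shows "pair (\<lambda>i. \<Sum>q\<in>Q. w q * g q i) x = (\<Sum>q\<in>Q. w q * pair (g q) x)"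
  unfolding pair_def by (simp add: sum_distrib_left sum_distrib_right mult.assoc sum.swap[of _ Q])

lemma pair_lin_x:
  assumes "finite G" "\<forall>i\<in>G. finite (supp (x i))"
  shows "pair f (\<lambda>p. \<Sum>i\<in>G. c i * x i p) = (\<Sum>i\<in>G. c i * pair f (x i))"
proof -
  define U where "U = (\<Union>i\<in>G. supp (x i))"
  have U: "finite U" using assms unfolding U_def by auto
  have "supp (\<lambda>p. \<Sum>i\<in>G. c i * x i p) \<subseteq> U"
  proof
    fix p assume "p \<in> supp (\<lambda>p. \<Sum>i\<in>G. c i * x i p)"
    then have "(\<Sum>i\<in>G. c i * x i p) \<noteq> 0" unfolding supp_def by simp
    then obtain i where "i \<in> G" "c i * x i p \<noteq> 0" by (meson sum.neutral)
    then show "p \<in> U" unfolding U_def supp_def by auto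
  qed
  then have "pair f (\<lambda>p. \<Sum>i\<in>G. c i * x i p) = (\<Sum>p\<in>U. f p * (\<Sum>i\<in>G. c i * x i p))"
    using pair_eq U by blast
  also have "\<dots> = (\<Sum>i\<in>G. c i * (\<Sum>p\<in>U. f p * x i p))"
    by (simp add: sum_distrib_left sum_distrib_right mult.assoc mult.left_commute sum.swap[of _ U])
  also have "\<dots> = (\<Sum>i\<in>G. c i * pair f (x i))"
  proof (rule sum.cong[OF refl])
    fix i assume "i \<in> G"
    then have "supp (x i) \<subseteq> U" unfolding U_def by auto
    then show "c i * (\<Sum>p\<in>U. f p * x i p) = c i * pair f (x i)" using pair_eq U by metis
  qed
  finally show ?thesis .
qed

lemma sum_list_nth_fun: "(\<Sum>g\<leftarrow>fs. g i) = (\<Sum>t<length fs. (fs ! t) i)"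
  by (simp add: sum_list_sum_nth atLeast0LessThan)

lemma pair_avg:
  assumes "finite (supp x)"
  shows "pair (avgvec fs l) x = (\<Sum>t<length fs. pair (fs ! t) x) / real l"
proof -
  have "avgvec fs l = (\<lambda>i. \<Sum>t<length fs. (1 / real l) * (fs ! t) i)"
    unfolding avgvec_def sum_list_nth_fun by (simp add: sum_divide_distrib)
  then have "pair (avgvec fs l) x = (\<Sum>t<length fs. (1 / real l) * pair (fs ! t) x)"
    using pair_lin_f[OF assms, where Q="{..<length fs}" and w="\<lambda>_. 1 / real l" and g="\<lambda>t. fs ! t"] by simp
  then show ?thesis by (simp add: sum_divide_distrib)
qed

lemma pair_bdd:
  assumes "\<forall>f\<in>W. props f"
  shows "bdd_above ((\<lambda>f. pair f x) ` W)"
proof (rule bdd_aboveI2)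
  fix f assume "f \<in> W"
  then have "\<forall>i. \<bar>f i\<bar> \<le> 1" using assms unfolding props_def by blast
  then have "f i * x i \<le> \<bar>x i\<bar>" for i
    by (metis abs_ge_self abs_mult mult_left_le_one_le abs_ge_zero order_trans)
  then show "pair f x \<le> (\<Sum>i\<in>supp x. \<bar>x i\<bar>)" unfolding pair_def by (rule sum_mono)
qed

lemma pair_le_xnorm:
  assumes "f \<in> Wset SF"
  shows "\<bar>pair f x\<bar> \<le> xnorm (Wset SF) x"
proof -
  have bdd: "bdd_above ((\<lambda>f. pair f x) ` Wset SF)" by (rule pair_bdd) (use W_props in blast)
  have "pair f x \<le> xnorm (Wset SF) x" unfolding xnorm_def using assms bdd by (auto intro: cSUP_upper)
  moreover have "pair (negf f) x \<le> xnorm (Wset SF) x"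
    unfolding xnorm_def using W_negf[OF assms] bdd by (auto intro: cSUP_upper)
  moreover have "pair (negf f) x = - pair f x" unfolding pair_def negf_def by (simp add: sum_negf)
  ultimately show ?thesis by linarith
qed

lemma ifneg: "(if b then f else negf f) i = (if b then 1 else -1) * f i"
  by (simp add: negf_def)

lemma W_functional:
  assumes Qfin: "finite Q" and Qne: "Q \<noteq> {}"
    and ok: "\<forall>q. avg_ok (fs q) (s q) \<and> set (fs q) \<subseteq> Wset SF"
    and aeq: "\<forall>q. a q = avgvec (fs q) (s q)"
    and ab: "\<forall>q q'. q < q' \<longrightarrow> blk (a q) (a q')"
    and sm: "strict_mono s" and smax: "\<forall>q. Max (supp (a q)) < s (Suc q)"
    and MSF: "(\<lambda>q. Min (supp (a q))) ` Q \<in> SF"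
  shows "(\<lambda>p. \<Sum>q\<in>Q. (if \<sigma> q then 1 else -1) * a q p) \<in> Wset SF"
proof -
  define qs where "qs = sorted_list_of_set Q"
  have qsset: "set qs = Q" and qsd: "distinct qs" and qss: "sorted_wrt (<) qs"
    using Qfin unfolding qs_def by auto
  define fs' where "fs' q = (if \<sigma> q then fs q else map negf (fs q))" for q
  define ps where "ps = map (\<lambda>q. (fs' q, s q)) qs"
  have av: "avgvec (fs' q) (s q) = (if \<sigma> q then a q else negf (a q))" for q
    unfolding fs'_def using aeq by (simp add: avgvec_negf)
  have suppav: "supp (avgvec (fs' q) (s q)) = supp (a q)" for q
    using av by simp
  have "(\<lambda>i. \<Sum>p\<leftarrow>ps. avgvec (fst p) (snd p) i) \<in> Wset SF"
  proof (rule Wset.vfgsum)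
    show "ps \<noteq> []" unfolding ps_def using qsset Qne by auto
    show "\<forall>p\<in>set ps. avg_ok (fst p) (snd p) \<and> (\<forall>f\<in>set (fst p). f \<in> Wset SF)"
      unfolding ps_def fs'_def using ok by (auto simp: avg_ok_negf intro: W_negf)
    have "sorted_wrt (\<lambda>q q'. blk (avgvec (fs' q) (s q)) (avgvec (fs' q') (s q'))) qs"
      by (rule sorted_wrt_mono_rel[OF _ qss]) (simp add: av ab)
    then show "sorted_wrt blk (map (\<lambda>p. avgvec (fst p) (snd p)) ps)"
      unfolding ps_def by (simp add: sorted_wrt_map)
    show "set (map (\<lambda>p. Min (supp (avgvec (fst p) (snd p)))) ps) \<in> SF"
      unfolding ps_def using MSF qsset by (simp add: suppav image_image)
    show "\<forall>r. Suc r < length ps \<longrightarrow> snd (ps ! r) < snd (ps ! Suc r) \<and>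
          Max (supp (avgvec (fst (ps ! r)) (snd (ps ! r)))) < snd (ps ! Suc r)"
    proof (intro allI impI)
      fix r assume r: "Suc r < length ps"
      then have r': "Suc r < length qs" unfolding ps_def by simp
      then have lt: "qs ! r < qs ! Suc r" using qss sorted_wrt_nth_less by blast
      then have "s (qs ! r) < s (qs ! Suc r)" using sm by (simp add: strict_mono_less)
      moreover have "Max (supp (a (qs ! r))) < s (qs ! Suc r)"
        using smax[rule_format, of "qs ! r"] lt sm
        by (metis Suc_leI order_less_le_trans strict_mono_less_eq)
      ultimately show "snd (ps ! r) < snd (ps ! Suc r) \<and>
          Max (supp (avgvec (fst (ps ! r)) (snd (ps ! r)))) < snd (ps ! Suc r)"
        using r' unfolding ps_def by (simp add: suppav)
    qed
  qed
  moreover have "(\<lambda>i. \<Sum>p\<leftarrow>ps. avgvec (fst p) (snd p) i) = (\<lambda>p. \<Sum>q\<in>Q. (if \<sigma> q then 1 else -1) * a q p)"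
  proof (rule ext)
    fix i
    have "(\<Sum>p\<leftarrow>ps. avgvec (fst p) (snd p) i) = (\<Sum>q\<leftarrow>qs. (if \<sigma> q then 1 else -1) * a q i)"
      unfolding ps_def by (simp add: av ifneg comp_def del: if_image_distrib)
    also have "\<dots> = (\<Sum>q\<in>Q. (if \<sigma> q then 1 else -1) * a q i)"
      using sum_list_distinct_conv_sum_set[OF qsd] qsset by metis
    finally show "(\<Sum>p\<leftarrow>ps. avgvec (fst p) (snd p) i) = (\<Sum>q\<in>Q. (if \<sigma> q then 1 else -1) * a q i)" .
  qed
  ultimately show ?thesis by simp
qed



lemma chain_setless:
  assumes "\<And>k. setless (A k) (A (Suc k))" "\<And>k. A k \<noteq> {}" "i < j"
  shows "setless (A i) (A j)"
  using assms(3)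
proof (induction j)
  case 0 then show ?case by simp
next
  case (Suc j)
  show ?case
  proof (cases "i = j")
    case True then show ?thesis using assms(1) by simp
  next
    case False
    then have "setless (A i) (A j)" using Suc by simp
    moreover obtain r where "r \<in> A j" using assms(2) by blast
    ultimately show ?thesis using assms(1)[of j] unfolding setless_def by (meson order.strict_trans)
  qed
qed

locale core =
  fixes SF :: "nat set set" and x :: "nat \<Rightarrow> nat \<Rightarrow> real" and C :: real
    and a :: "nat \<Rightarrow> nat \<Rightarrow> real" and s :: "nat \<Rightarrow> nat" and fs :: "nat \<Rightarrow> (nat \<Rightarrow> real) list"
    and Q G :: "nat set" and c :: "nat \<Rightarrow> real" and z :: ord and \<epsilon> \<delta> :: real
  assumes xblk: "blockseq x"
    and xC: "\<And>k f. f \<in> Wset SF \<Longrightarrow> \<bar>pair f (x k)\<bar> \<le> C"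
    and fsok: "\<And>q. avg_ok (fs q) (s q) \<and> set (fs q) \<subseteq> Wset SF"
    and aeq: "\<And>q. a q = avgvec (fs q) (s q)"
    and ablk: "\<And>q. blk (a q) (a (Suc q))"
    and smono: "strict_mono s"
    and smax: "\<And>q. Max (supp (a q)) < s (Suc q)"
    and Qfin: "finite Q"
    and MS0: "(\<lambda>q. Min (supp (a q))) ` Q \<in> schreier z"
    and MSF: "(\<lambda>q. Min (supp (a q))) ` Q \<in> SF"
    and Gfin: "finite G"
    and cpos: "\<And>i. i \<in> G \<Longrightarrow> c i \<ge> 0" and csum: "sum c G \<le> 1"
    and weight: "\<And>I. I \<subseteq> G \<Longrightarrow> (\<lambda>i. Min (supp (x i))) ` I \<in> schreier z \<Longrightarrow> sum c I < \<epsilon>"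
    and dpos: "\<delta> > 0" and dl: "\<And>q. q \<in> Q \<Longrightarrow> 1 \<le> \<delta> * real (s q)"
    and Cnn: "C \<ge> 0"
begin

definition "mn i = Min (supp (x i))"
definition "mx i = Max (supp (x i))"
definition "m q = Min (supp (a q))"
definition "meets q i \<longleftrightarrow> supp (a q) \<inter> supp (x i) \<noteq> {}"
definition "A = {i\<in>G. \<exists>q\<in>Q. mn i \<le> m q \<and> m q \<le> mx i}"
definition "N q i = card {t. t < length (fs q) \<and> supp (fs q ! t) \<inter> supp (x i) \<noteq> {}}"
definition "Hq q = {i\<in>G - A. \<delta> * real (s q) < real (N q i)}"

lemma x_fin: "finite (supp (x i))" and x_ne: "supp (x i) \<noteq> {}" and x_0: "0 \<notin> supp (x i)"
  using xblk unfolding blockseq_def by auto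

lemma x_lt: "i < i' \<Longrightarrow> p \<in> supp (x i) \<Longrightarrow> p' \<in> supp (x i') \<Longrightarrow> p < p'"
  using chain_setless[of "\<lambda>k. supp (x k)"] xblk x_ne unfolding blockseq_def setless_def by blast

lemma mn_le: "p \<in> supp (x i) \<Longrightarrow> mn i \<le> p" and le_mx: "p \<in> supp (x i) \<Longrightarrow> p \<le> mx i"
  unfolding mn_def mx_def using x_fin by auto

lemma mn_in: "mn i \<in> supp (x i)" and mx_in: "mx i \<in> supp (x i)"
  unfolding mn_def mx_def using x_fin x_ne by auto

lemma mx_lt_mn: "i < i' \<Longrightarrow> mx i < mn i'"
  using x_lt mx_in mn_in by blast

lemma mn_mono: "i < i' \<Longrightarrow> mn i < mn i'"
  using x_lt mn_in by blast

lemma mn_pos: "1 \<le> mn i"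
  using mn_in x_0 by (metis less_one not_le)

lemma a_W: "a q \<in> Wset SF"
  unfolding aeq using fsok[of q] by (auto intro: Wset.average)

lemma a_fin: "finite (supp (a q))" and a_ne: "supp (a q) \<noteq> {}"
  using W_props[OF a_W] unfolding props_def by auto

lemma a_lt: "q < q' \<Longrightarrow> p \<in> supp (a q) \<Longrightarrow> p' \<in> supp (a q') \<Longrightarrow> p < p'"
  using chain_setless[of "\<lambda>k. supp (a k)"] ablk a_ne unfolding blk_def setless_def by blast

lemma a_blk: "q < q' \<Longrightarrow> blk (a q) (a q')"
  using a_lt unfolding blk_def setless_def by blast

lemma m_in: "m q \<in> supp (a q)" and m_le: "p \<in> supp (a q) \<Longrightarrow> m q \<le> p"
  unfolding m_def using a_fin a_ne by auto

lemma m_mono: "q < q' \<Longrightarrow> m q < m q'"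
  using a_lt m_in by blast

lemma m_mono_le: "q \<le> q' \<Longrightarrow> m q \<le> m q'"
  using m_mono by (metis le_less)

lemma s_pos: "real (s q) \<ge> 2"
  using fsok[of q] unfolding avg_ok_def by simp

lemma fs_W: "t < length (fs q) \<Longrightarrow> fs q ! t \<in> Wset SF"
  using fsok[of q] nth_mem by blast

lemma fs_sorted: "sorted_wrt blk (fs q)"
  using fsok[of q] unfolding avg_ok_def by blast

lemma fs_len: "length (fs q) \<le> s q"
  using fsok[of q] unfolding avg_ok_def by blast

lemma N_meets: "0 < N q i \<Longrightarrow> meets q i"
proof -
  assume "0 < N q i"
  then obtain t where t: "t < length (fs q)" "supp (fs q ! t) \<inter> supp (x i) \<noteq> {}"
    unfolding N_def by (metis (mono_tags, lifting) card.empty empty_Collect_eq less_irrefl)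
  then obtain p where p: "p \<in> supp (fs q ! t)" "p \<in> supp (x i)" by blast
  have "(\<Sum>g\<leftarrow>fs q. g p) = (fs q ! t) p"
    by (rule blk_sum_one[OF fs_sorted]) (use t p in \<open>auto simp: supp_def\<close>)
  then have "a q p = (fs q ! t) p / real (s q)" unfolding aeq avgvec_def by simp
  moreover have "(fs q ! t) p \<noteq> 0" using p unfolding supp_def by simp
  ultimately have "a q p \<noteq> 0" using s_pos[of q] by simp
  then show ?thesis using p unfolding meets_def supp_def by blast
qed

lemma pair_a_bound: "\<bar>pair (a q) (x i)\<bar> \<le> C * real (N q i) / real (s q)"
proof -
  define T where "T = {t. t < length (fs q) \<and> supp (fs q ! t) \<inter> supp (x i) \<noteq> {}}"
  have Tsub: "T \<subseteq> {..<length (fs q)}" unfolding T_def by auto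
  have "\<bar>\<Sum>t<length (fs q). pair (fs q ! t) (x i)\<bar> \<le> (\<Sum>t<length (fs q). \<bar>pair (fs q ! t) (x i)\<bar>)"
    by (rule sum_abs)
  also have "\<dots> = (\<Sum>t\<in>T. \<bar>pair (fs q ! t) (x i)\<bar>)"
    by (rule sum.mono_neutral_right) (auto simp: T_def pair_zero)
  also have "\<dots> \<le> (\<Sum>t\<in>T. C)"
    by (rule sum_mono) (use xC fs_W in \<open>auto simp: T_def\<close>)
  also have "\<dots> = C * real (N q i)" unfolding N_def T_def by simp
  finally have "\<bar>\<Sum>t<length (fs q). pair (fs q ! t) (x i)\<bar> \<le> C * real (N q i)" .
  moreover have "pair (a q) (x i) = (\<Sum>t<length (fs q). pair (fs q ! t) (x i)) / real (s q)"
    unfolding aeq by (rule pair_avg[OF x_fin])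
  ultimately show ?thesis using s_pos[of q] by (simp add: divide_right_mono)
qed

lemma meets_unique:
  assumes "i \<in> G" "i \<notin> A" "q \<in> Q" "q' \<in> Q" "meets q i" "meets q' i"
  shows "q = q'"
proof (rule ccontr)
  have key: "False" if H: "q1 \<in> Q" "q2 \<in> Q" "q1 < q2" "meets q1 i" "meets q2 i" for q1 q2
  proof -
    obtain p where p: "p \<in> supp (a q1)" "p \<in> supp (x i)" using H(4) unfolding meets_def by blast
    obtain p' where p': "p' \<in> supp (a q2)" "p' \<in> supp (x i)" using H(5) unfolding meets_def by blast
    have "m q2 \<le> p'" using m_le p'(1) .
    then have "m q2 \<le> mx i" using le_mx[OF p'(2)] by linarith
    moreover have "p < m q2" using a_lt[OF H(3) p(1) m_in] .
    then have "mn i \<le> m q2" using mn_le[OF p(2)] by linarith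
    ultimately have "i \<in> A" using assms(1) H(2) unfolding A_def by blast
    then show False using assms(2) by blast
  qed
  assume "q \<noteq> q'"
  then show False using key assms by (metis linorder_neqE_nat)
qed

lemma meets_notA: "i \<in> G \<Longrightarrow> i \<notin> A \<Longrightarrow> q \<in> Q \<Longrightarrow> meets q i \<Longrightarrow> m q < mn i"
proof -
  assume as: "i \<in> G" "i \<notin> A" "q \<in> Q" "meets q i"
  obtain p where p: "p \<in> supp (a q)" "p \<in> supp (x i)" using as(4) unfolding meets_def by blast
  have "m q \<le> mx i" using m_le[OF p(1)] le_mx[OF p(2)] by linarith
  show "m q < mn i"
  proof (rule ccontr)
    assume "\<not> m q < mn i"
    then have "mn i \<le> m q" by simp
    then have "i \<in> A" using as \<open>m q \<le> mx i\<close> unfolding A_def by blast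
    then show False using as by blast
  qed
qed

lemma meets_order: "meets q i \<Longrightarrow> meets q' i' \<Longrightarrow> i < i' \<Longrightarrow> q \<le> q'"
proof (rule ccontr)
  assume as: "meets q i" "meets q' i'" "i < i'" "\<not> q \<le> q'"
  obtain p where p: "p \<in> supp (a q)" "p \<in> supp (x i)" using as(1) unfolding meets_def by blast
  obtain p' where p': "p' \<in> supp (a q')" "p' \<in> supp (x i')" using as(2) unfolding meets_def by blast
  have "p < p'" using x_lt[OF as(3) p(2) p'(2)] .
  moreover have "p' < p" using a_lt[OF _ p'(1) p(1)] as(4) by simp
  ultimately show False by simp
qed

lemma count_lemma:
  assumes "finite I"
  shows "(\<Sum>i\<in>I. N q i - 1) \<le> length (fs q)"
proof -
  define L where "L = length (fs q)"
  define T where "T i = {t. t < L \<and> supp (fs q ! t) \<inter> supp (x i) \<noteq> {}}" for i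
  define S where "S i = {t. t < L \<and> supp (fs q ! t) \<inter> {mn i<..mx i} \<noteq> {} \<and> supp (fs q ! t) \<subseteq> {mn i<..}}" for i
  have TS: "card (T i) - 1 \<le> card (S i)" for i
  proof (cases "T i = {}")
    case True then show ?thesis by simp
  next
    case False
    have Tfin: "finite (T i)" unfolding T_def by auto
    define t0 where "t0 = Min (T i)"
    have t0: "t0 \<in> T i" unfolding t0_def using Tfin False by simp
    have "T i - {t0} \<subseteq> S i"
    proof
      fix t assume t: "t \<in> T i - {t0}"
      then have "t0 < t" unfolding t0_def using Tfin by (metis DiffE Min_le insertCI le_neq_implies_less)
      moreover have "t < L" using t unfolding T_def by simp
      ultimately have b: "blk (fs q ! t0) (fs q ! t)"
        using fs_sorted[of q] sorted_wrt_nth_less unfolding L_def by blast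
      obtain p0 where p0: "p0 \<in> supp (fs q ! t0)" "p0 \<in> supp (x i)" using t0 unfolding T_def by blast
      obtain p where p: "p \<in> supp (fs q ! t)" "p \<in> supp (x i)" using t unfolding T_def by blast
      have gt: "\<forall>p'\<in>supp (fs q ! t). p0 < p'" using b p0(1) unfolding blk_def setless_def by blast
      have "mn i \<le> p0" using mn_le[OF p0(2)] .
      then have "supp (fs q ! t) \<subseteq> {mn i<..}" using gt by auto
      moreover have "p \<in> {mn i<..mx i}" using gt p \<open>mn i \<le> p0\<close> le_mx[OF p(2)] by auto
      ultimately show "t \<in> S i" using t p unfolding S_def T_def by auto
    qed
    moreover have "finite (S i)" unfolding S_def by auto
    ultimately have "card (T i - {t0}) \<le> card (S i)" by (simp add: card_mono)
    then show ?thesis using t0 Tfin by simp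
  qed
  have disj: "S i \<inter> S i' = {}" if "i \<noteq> i'" for i i'
  proof -
    have "False" if H: "i1 < i2" "t \<in> S i1" "t \<in> S i2" for i1 i2 t
    proof -
      obtain p where "p \<in> supp (fs q ! t)" "mn i1 < p" "p \<le> mx i1" using H(2) unfolding S_def by auto
      moreover have "supp (fs q ! t) \<subseteq> {mn i2<..}" using H(3) unfolding S_def by auto
      ultimately have "mn i2 < p" by auto
      then show False using mx_lt_mn[OF H(1)] \<open>p \<le> mx i1\<close> by simp
    qed
    then show ?thesis using \<open>i \<noteq> i'\<close> by (metis disjoint_iff linorder_neqE_nat)
  qed
  have "(\<Sum>i\<in>I. N q i - 1) \<le> (\<Sum>i\<in>I. card (S i))"
    by (rule sum_mono) (use TS in \<open>simp add: N_def T_def L_def\<close>)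
  also have "\<dots> = card (\<Union>i\<in>I. S i)"
  proof -
    have fins: "\<forall>i\<in>I. finite (S i)" by (simp add: S_def)
    have "\<forall>i\<in>I. \<forall>j\<in>I. i \<noteq> j \<longrightarrow> S i \<inter> S j = {}" using disj by blast
    from card_UN_disjoint[OF assms fins this] show ?thesis by simp
  qed
  also have "\<dots> \<le> card {..<L}"
    by (rule card_mono) (auto simp: S_def)
  finally show ?thesis unfolding L_def by simp
qed

lemma Hq_card: "q \<in> Q \<Longrightarrow> real (card (Hq q)) \<le> 2 / \<delta>"
proof -
  assume qQ: "q \<in> Q"
  have fin: "finite (Hq q)" unfolding Hq_def using Gfin by auto
  have ds: "1 \<le> \<delta> * real (s q)" using dl qQ .
  have each: "\<delta> * real (s q) / 2 \<le> real (N q i - 1)" if "i \<in> Hq q" for i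
  proof -
    have lt: "\<delta> * real (s q) < real (N q i)" using that unfolding Hq_def by simp
    then have "N q i \<ge> 2" using ds by linarith
    then have "real (N q i - 1) = real (N q i) - 1" "real (N q i) \<ge> 2" by auto
    then show ?thesis using lt ds by linarith
  qed
  have "real (card (Hq q)) * (\<delta> * real (s q) / 2) = (\<Sum>i\<in>Hq q. \<delta> * real (s q) / 2)" by simp
  also have "\<dots> \<le> (\<Sum>i\<in>Hq q. real (N q i - 1))" by (rule sum_mono) (rule each)
  also have "\<dots> = real (\<Sum>i\<in>Hq q. N q i - 1)" by simp
  also have "\<dots> \<le> real (s q)" using count_lemma[OF fin, of q] fs_len[of q] by linarith
  finally have h: "real (card (Hq q)) * (\<delta> * real (s q) / 2) \<le> real (s q)" .
  have sp: "real (s q) > 0" using s_pos[of q] by simp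
  have "(real (card (Hq q)) * \<delta> / 2) * real (s q) \<le> 1 * real (s q)" using h by simp
  then have "real (card (Hq q)) * \<delta> / 2 \<le> 1" using sp by (rule mult_right_le_imp_le)
  then have "real (card (Hq q)) * \<delta> \<le> 2" by simp
  then show ?thesis using pos_le_divide_eq[OF dpos] by blast
qed

end



context core begin

lemma m_fun: "(\<lambda>q. Min (supp (a q))) = m" by (rule ext) (simp add: m_def)
lemma mn_fun: "(\<lambda>i. Min (supp (x i))) = mn" by (rule ext) (simp add: mn_def)

lemma sch_empty: "{} \<in> schreier z'" by (induction z') auto

lemma eps_pos: "0 < \<epsilon>" using weight[of "{}"] sch_empty by simp

lemma weight_dom:
  assumes I: "I \<subseteq> G" and g: "\<And>i. i \<in> I \<Longrightarrow> g i \<in> Q \<and> m (g i) \<le> mn i"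
    and gm: "\<And>i i'. i \<in> I \<Longrightarrow> i' \<in> I \<Longrightarrow> i < i' \<Longrightarrow> g i < g i'"
  shows "sum c I < \<epsilon>"
proof -
  have inj: "inj_on mn I"
    by (rule inj_onI) (metis mn_mono linorder_neqE_nat less_irrefl)
  define \<psi> where "\<psi> p = m (g (inv_into I mn p))" for p
  have \<psi>: "\<psi> (mn i) = m (g i)" if "i \<in> I" for i using inv_into_f_f[OF inj that] unfolding \<psi>_def by simp
  have "mn ` I \<in> schreier z"
  proof (rule sch_dom[OF MS0[unfolded m_fun]])
    show "finite (mn ` I)" using I Gfin finite_subset by blast
    show "\<forall>p\<in>mn ` I. \<psi> p \<in> m ` Q \<and> \<psi> p \<le> p" using \<psi> g by auto
    show "\<forall>p\<in>mn ` I. \<forall>p'\<in>mn ` I. p < p' \<longrightarrow> \<psi> p < \<psi> p'"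
    proof (intro ballI impI)
      fix p p' assume "p \<in> mn ` I" "p' \<in> mn ` I" "p < p'"
      then obtain i i' where ii: "i \<in> I" "i' \<in> I" "p = mn i" "p' = mn i'" by blast
      have "i < i'"
      proof (rule ccontr)
        assume "\<not> i < i'"
        then have "i' \<le> i" by simp
        then have "mn i' \<le> mn i" using mn_mono by (metis le_less)
        then show False using \<open>p < p'\<close> ii by simp
      qed
      then have "g i < g i'" using gm ii by blast
      then show "\<psi> p < \<psi> p'" using ii \<psi> m_mono by simp
    qed
  qed
  then show ?thesis using weight[OF I] unfolding mn_fun by blast
qed

lemma weight_A: "sum c A \<le> 2 * \<epsilon>"
proof -
  define A0 where "A0 = {i\<in>A. \<not> (\<exists>q\<in>Q. m q < mn i)}"
  define A1 where "A1 = A - A0"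
  have AG: "A \<subseteq> G" unfolding A_def by auto
  have Afin: "finite A" using AG Gfin finite_subset by blast
  have split: "sum c A = sum c A0 + sum c A1"
    unfolding A1_def using Afin by (metis A0_def Collect_subset sum.subset_diff add.commute)
  have A0single: "i = i'" if "i \<in> A0" "i' \<in> A0" for i i'
  proof (rule ccontr)
    have k: False if H: "j \<in> A0" "j' \<in> A0" "j < j'" for j j'
    proof -
      obtain q where q: "q \<in> Q" "mn j \<le> m q" "m q \<le> mx j" using H(1) unfolding A0_def A_def by blast
      then have "m q < mn j'" using mx_lt_mn[OF H(3)] by linarith
      then show False using H(2) q(1) unfolding A0_def by blast
    qed
    assume "i \<noteq> i'"
    then show False using k that by (metis linorder_neqE_nat)
  qed
  have "sum c A0 \<le> \<epsilon>"
  proof (cases "A0 = {}")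
    case True then show ?thesis using eps_pos by simp
  next
    case False
    then obtain i0 where "i0 \<in> A0" by blast
    then have A0eq: "A0 = {i0}" using A0single by blast
    have "i0 \<in> G" using \<open>i0 \<in> A0\<close> AG unfolding A0_def by blast
    have "(\<lambda>i. Min (supp (x i))) ` {i0} \<in> schreier z"
      unfolding mn_fun using sch_single[OF mn_pos] by simp
    then have "sum c {i0} < \<epsilon>" using weight[of "{i0}"] \<open>i0 \<in> G\<close> by blast
    then show ?thesis using A0eq by simp
  qed
  moreover have "sum c A1 < \<epsilon>"
  proof -
    define g where "g i = Max {q\<in>Q. m q < mn i}" for i
    have gprop: "g i \<in> Q \<and> m (g i) < mn i" if "i \<in> A1" for i
    proof -
      have "{q\<in>Q. m q < mn i} \<noteq> {}" using that unfolding A1_def A0_def by blast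
      moreover have "finite {q\<in>Q. m q < mn i}" using Qfin by simp
      ultimately have "g i \<in> {q\<in>Q. m q < mn i}" unfolding g_def using Max_in by blast
      then show ?thesis by simp
    qed
    show ?thesis
    proof (rule weight_dom)
      show "A1 \<subseteq> G" using AG unfolding A1_def by blast
      show "g i \<in> Q \<and> m (g i) \<le> mn i" if "i \<in> A1" for i using gprop[OF that] by simp
      show "g i < g i'" if H: "i \<in> A1" "i' \<in> A1" "i < i'" for i i'
      proof -
        obtain qi where qi: "qi \<in> Q" "mn i \<le> m qi" "m qi \<le> mx i" using H(1) unfolding A1_def A_def by blast
        have "m qi < mn i'" using qi(3) mx_lt_mn[OF H(3)] by linarith
        then have "qi \<le> g i'" unfolding g_def using qi(1) Qfin by (intro Max_ge) auto
        moreover have "g i < qi"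
        proof (rule ccontr)
          assume "\<not> g i < qi"
          then have "m qi \<le> m (g i)" using m_mono_le by simp
          then show False using gprop[OF H(1)] qi(2) by linarith
        qed
        ultimately show ?thesis by simp
      qed
    qed
  qed
  ultimately show ?thesis using split by linarith
qed

definition "H = {i\<in>G - A. \<exists>q\<in>Q. \<delta> * real (s q) < real (N q i)}"

lemma Hq_meets: "i \<in> Hq q \<Longrightarrow> q \<in> Q \<Longrightarrow> meets q i"
proof -
  assume "i \<in> Hq q" "q \<in> Q"
  then have "\<delta> * real (s q) < real (N q i)" unfolding Hq_def by simp
  moreover have "0 \<le> \<delta> * real (s q)" using dpos by simp
  ultimately have "0 < N q i" by linarith
  then show ?thesis by (rule N_meets)
qed

lemma weight_H: "sum c H \<le> 2 / \<delta> * \<epsilon>"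
proof -
  have HU: "H = (\<Union>q\<in>Q. Hq q)" unfolding H_def Hq_def by auto
  have Hqfin: "finite (Hq q)" for q unfolding Hq_def using Gfin by auto
  have Hdisj: "Hq q \<inter> Hq q' = {}" if "q \<in> Q" "q' \<in> Q" "q \<noteq> q'" for q q'
  proof (rule ccontr)
    assume "Hq q \<inter> Hq q' \<noteq> {}"
    then obtain i where i: "i \<in> Hq q" "i \<in> Hq q'" by blast
    then have "i \<in> G" "i \<notin> A" unfolding Hq_def by auto
    then have "q = q'" using meets_unique Hq_meets i that by blast
    then show False using that by simp
  qed
  have "sum c H = (\<Sum>q\<in>Q. sum c (Hq q))"
    unfolding HU by (rule sum.UNION_disjoint) (use Qfin Hqfin Hdisj in auto)
  define Q' where "Q' = {q\<in>Q. Hq q \<noteq> {}}"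
  define \<sigma> where "\<sigma> q = (SOME i. i \<in> Hq q \<and> (\<forall>i'\<in>Hq q. c i' \<le> c i))" for q
  have \<sigma>: "\<sigma> q \<in> Hq q \<and> (\<forall>i'\<in>Hq q. c i' \<le> c (\<sigma> q))" if "q \<in> Q'" for q
  proof -
    have ne: "Hq q \<noteq> {}" using that unfolding Q'_def by simp
    have "Max (c ` Hq q) \<in> c ` Hq q" using ne Hqfin by simp
    then obtain i where "i \<in> Hq q" "c i = Max (c ` Hq q)" by auto
    moreover have "\<forall>i'\<in>Hq q. c i' \<le> Max (c ` Hq q)" using Hqfin by simp
    ultimately have "\<exists>i. i \<in> Hq q \<and> (\<forall>i'\<in>Hq q. c i' \<le> c i)" by metis
    then show ?thesis unfolding \<sigma>_def by (rule someI_ex)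
  qed
  have HqG: "Hq q \<subseteq> G" for q unfolding Hq_def by auto
  have "(\<Sum>q\<in>Q. sum c (Hq q)) = (\<Sum>q\<in>Q'. sum c (Hq q))"
    by (rule sum.mono_neutral_right) (use Qfin in \<open>auto simp: Q'_def\<close>)
  also have "\<dots> \<le> (\<Sum>q\<in>Q'. 2 / \<delta> * c (\<sigma> q))"
  proof (rule sum_mono)
    fix q assume q: "q \<in> Q'"
    then have qQ: "q \<in> Q" unfolding Q'_def by simp
    have "sum c (Hq q) \<le> real (card (Hq q)) * c (\<sigma> q)"
      using \<sigma>[OF q] by (intro sum_bounded_above) blast
    also have "\<dots> \<le> 2 / \<delta> * c (\<sigma> q)"
    proof (rule mult_right_mono)
      show "real (card (Hq q)) \<le> 2 / \<delta>" using Hq_card[OF qQ] .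
      show "0 \<le> c (\<sigma> q)" using \<sigma>[OF q] HqG cpos by blast
    qed
    finally show "sum c (Hq q) \<le> 2 / \<delta> * c (\<sigma> q)" .
  qed
  also have "\<dots> = 2 / \<delta> * (\<Sum>q\<in>Q'. c (\<sigma> q))" by (simp add: sum_distrib_left)
  finally have chain1: "(\<Sum>q\<in>Q. sum c (Hq q)) \<le> 2 / \<delta> * (\<Sum>q\<in>Q'. c (\<sigma> q))" .
  have reidx: "(\<Sum>q\<in>Q'. c (\<sigma> q)) = sum c (\<sigma> ` Q')"
  proof -
    have "inj_on \<sigma> Q'"
    proof (rule inj_onI)
      fix q q' assume qq: "q \<in> Q'" "q' \<in> Q'" "\<sigma> q = \<sigma> q'"
      then have "q \<in> Q" "q' \<in> Q" unfolding Q'_def by auto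
      moreover have "\<sigma> q \<in> Hq q" using \<sigma> qq(1) by blast
      moreover have "\<sigma> q \<in> Hq q'" using \<sigma>[OF qq(2)] qq(3) by simp
      ultimately show "q = q'" using Hdisj by blast
    qed
    then show ?thesis by (simp add: sum.reindex)
  qed
  have lt: "sum c (\<sigma> ` Q') < \<epsilon>"
  proof (rule weight_dom)
    have Q'Q: "Q' \<subseteq> Q" unfolding Q'_def by auto
    show "\<sigma> ` Q' \<subseteq> G" using \<sigma> HqG by blast
    define g where "g = inv_into Q' \<sigma>"
    have gi: "g (\<sigma> q) \<in> Q' \<and> \<sigma> (g (\<sigma> q)) = \<sigma> q" if "q \<in> Q'" for q
      unfolding g_def using that by (simp add: inv_into_into f_inv_into_f)
    have mt: "meets (g i) i \<and> i \<in> G \<and> i \<notin> A \<and> g i \<in> Q" if H0: "i \<in> \<sigma> ` Q'" for i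
    proof -
      obtain q where q: "q \<in> Q'" "i = \<sigma> q" using H0 by blast
      have "g i \<in> Q'" "\<sigma> (g i) = i" using gi q by auto
      then have "i \<in> Hq (g i)" using \<sigma> by metis
      moreover have "g i \<in> Q" using \<open>g i \<in> Q'\<close> Q'Q by blast
      ultimately show ?thesis using Hq_meets unfolding Hq_def by auto
    qed
    show "g i \<in> Q \<and> m (g i) \<le> mn i" if "i \<in> \<sigma> ` Q'" for i
      using mt[OF that] meets_notA by (meson less_imp_le)
    show "g i < g i'" if H: "i \<in> \<sigma> ` Q'" "i' \<in> \<sigma> ` Q'" "i < i'" for i i'
    proof -
      have "g i \<le> g i'" using meets_order mt H by blast
      moreover have "g i \<noteq> g i'"
      proof
        assume e: "g i = g i'"
        obtain q where q: "q \<in> Q'" "i = \<sigma> q" using H(1) by blast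
        obtain q' where q': "q' \<in> Q'" "i' = \<sigma> q'" using H(2) by blast
        have "i = i'" using gi[OF q(1)] gi[OF q'(1)] e q(2) q'(2) by metis
        then show False using H(3) by simp
      qed
      ultimately show ?thesis by simp
    qed
  qed
  have "2 / \<delta> * (\<Sum>q\<in>Q'. c (\<sigma> q)) \<le> 2 / \<delta> * \<epsilon>"
    using lt reidx dpos by (intro mult_left_mono) auto
  then show ?thesis using \<open>sum c H = (\<Sum>q\<in>Q. sum c (Hq q))\<close> chain1 by linarith
qed

end



context core begin

lemma wfun:
  assumes J: "J \<subseteq> G"
  shows "(\<Sum>q\<in>Q. \<bar>\<Sum>i\<in>J. c i * pair (a q) (x i)\<bar>) \<le> C * sum c J"
proof (cases "Q = {}")
  case True
  have "0 \<le> sum c J" using J cpos by (intro sum_nonneg) blast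
  then show ?thesis using True Cnn by simp
next
  case False
  define S where "S q = (\<Sum>i\<in>J. c i * pair (a q) (x i))" for q
  define sg where "sg q = (if 0 \<le> S q then 1 else (-1::real))" for q
  define f where "f = (\<lambda>p. \<Sum>q\<in>Q. (if 0 \<le> S q then 1 else -1) * a q p)"
  have fW: "f \<in> Wset SF" unfolding f_def
  proof (rule W_functional[OF Qfin False])
    show "\<forall>q. avg_ok (fs q) (s q) \<and> set (fs q) \<subseteq> Wset SF" using fsok by blast
    show "\<forall>q. a q = avgvec (fs q) (s q)" using aeq by blast
    show "\<forall>q q'. q < q' \<longrightarrow> blk (a q) (a q')" using a_blk by blast
    show "strict_mono s" by (rule smono)
    show "\<forall>q. Max (supp (a q)) < s (Suc q)" using smax by blast
    show "(\<lambda>q. Min (supp (a q))) ` Q \<in> SF" by (rule MSF)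
  qed
  have pf: "pair f (x i) = (\<Sum>q\<in>Q. sg q * pair (a q) (x i))" for i
    unfolding f_def sg_def by (rule pair_lin_f[OF x_fin])
  have "(\<Sum>q\<in>Q. \<bar>S q\<bar>) = (\<Sum>q\<in>Q. sg q * S q)"
    by (rule sum.cong) (auto simp: sg_def)
  also have "\<dots> = (\<Sum>i\<in>J. c i * pair f (x i))"
    unfolding pf S_def by (simp add: sum_distrib_left mult.left_commute sum.swap[of _ Q])
  also have "\<dots> \<le> (\<Sum>i\<in>J. c i * C)"
  proof (rule sum_mono)
    fix i assume "i \<in> J"
    then have "0 \<le> c i" using J cpos by blast
    moreover have "pair f (x i) \<le> C" using xC[OF fW, of i] by linarith
    ultimately show "c i * pair f (x i) \<le> c i * C" by (rule mult_left_mono[rotated])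
  qed
  also have "\<dots> = C * sum c J" by (simp add: sum_distrib_left mult.commute)
  finally show ?thesis unfolding S_def .
qed

lemma R_bound:
  assumes i: "i \<in> G" "i \<notin> A" and Nb: "\<And>q. q \<in> Q \<Longrightarrow> real (N q i) \<le> \<delta> * real (s q)"
  shows "(\<Sum>q\<in>Q. \<bar>pair (a q) (x i)\<bar>) \<le> C * \<delta>"
proof (cases "\<exists>q0\<in>Q. meets q0 i")
  case True
  then obtain q0 where q0: "q0 \<in> Q" "meets q0 i" by blast
  have "(\<Sum>q\<in>Q. \<bar>pair (a q) (x i)\<bar>) = (\<Sum>q\<in>{q0}. \<bar>pair (a q) (x i)\<bar>)"
  proof (rule sum.mono_neutral_right)
    show "finite Q" by (rule Qfin)
    show "{q0} \<subseteq> Q" using q0 by simp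
    show "\<forall>q\<in>Q - {q0}. \<bar>pair (a q) (x i)\<bar> = 0"
    proof
      fix q assume q: "q \<in> Q - {q0}"
      then have "\<not> meets q i" using meets_unique[OF i _ q0(1) _ q0(2)] by blast
      then show "\<bar>pair (a q) (x i)\<bar> = 0" unfolding meets_def using pair_zero by simp
    qed
  qed
  also have "\<dots> \<le> C * real (N q0 i) / real (s q0)" using pair_a_bound by simp
  also have "\<dots> \<le> C * \<delta>"
  proof -
    have sp: "0 < real (s q0)" using s_pos[of q0] by simp
    have "real (N q0 i) / real (s q0) \<le> \<delta>" using Nb[OF q0(1)] sp by (simp add: divide_le_eq)
    then have "C * (real (N q0 i) / real (s q0)) \<le> C * \<delta>" using Cnn by (rule mult_left_mono)
    then show ?thesis by simp
  qed
  finally show ?thesis .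
next
  case False
  then have "\<forall>q\<in>Q. \<bar>pair (a q) (x i)\<bar> = 0" unfolding meets_def using pair_zero by simp
  then show ?thesis using Cnn dpos by simp
qed

lemma core_bound:
  "(\<Sum>q\<in>Q. \<bar>\<Sum>i\<in>G. c i * pair (a q) (x i)\<bar>) \<le> C * (2 * \<epsilon>) + C * (2 / \<delta> * \<epsilon>) + C * \<delta>"
proof -
  define R where "R = G - A - H"
  have AG: "A \<subseteq> G" unfolding A_def by auto
  have HG: "H \<subseteq> G - A" unfolding H_def by auto
  have RG: "R \<subseteq> G" unfolding R_def by auto
  define P where "P q i = c i * pair (a q) (x i)" for q i
  have dec: "(\<Sum>i\<in>G. P q i) = (\<Sum>i\<in>A. P q i) + (\<Sum>i\<in>H. P q i) + (\<Sum>i\<in>R. P q i)" for q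
  proof -
    have "(\<Sum>i\<in>G. P q i) = (\<Sum>i\<in>G - A. P q i) + (\<Sum>i\<in>A. P q i)"
      using sum.subset_diff[OF AG Gfin] by simp
    moreover have "(\<Sum>i\<in>G - A. P q i) = (\<Sum>i\<in>R. P q i) + (\<Sum>i\<in>H. P q i)"
      unfolding R_def using sum.subset_diff[OF HG] Gfin by simp
    ultimately show ?thesis by simp
  qed
  have ab: "\<bar>\<Sum>i\<in>G. P q i\<bar> \<le> \<bar>\<Sum>i\<in>A. P q i\<bar> + \<bar>\<Sum>i\<in>H. P q i\<bar> + (\<Sum>i\<in>R. c i * \<bar>pair (a q) (x i)\<bar>)" for q
  proof -
    have "\<bar>\<Sum>i\<in>R. P q i\<bar> \<le> (\<Sum>i\<in>R. \<bar>P q i\<bar>)" by (rule sum_abs)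
    also have "\<dots> = (\<Sum>i\<in>R. c i * \<bar>pair (a q) (x i)\<bar>)"
      by (rule sum.cong) (use RG cpos in \<open>auto simp: P_def abs_mult\<close>)
    finally show ?thesis unfolding dec by linarith
  qed
  have "(\<Sum>q\<in>Q. \<bar>\<Sum>i\<in>G. P q i\<bar>) \<le> (\<Sum>q\<in>Q. \<bar>\<Sum>i\<in>A. P q i\<bar>) + (\<Sum>q\<in>Q. \<bar>\<Sum>i\<in>H. P q i\<bar>)
      + (\<Sum>q\<in>Q. \<Sum>i\<in>R. c i * \<bar>pair (a q) (x i)\<bar>)"
    using sum_mono[of Q, OF ab] by (simp add: sum.distrib)
  also have "(\<Sum>q\<in>Q. \<bar>\<Sum>i\<in>A. P q i\<bar>) \<le> C * sum c A" unfolding P_def using wfun[OF AG] .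
  also have "(\<Sum>q\<in>Q. \<bar>\<Sum>i\<in>H. P q i\<bar>) \<le> C * sum c H" unfolding P_def using wfun HG by blast
  also have "(\<Sum>q\<in>Q. \<Sum>i\<in>R. c i * \<bar>pair (a q) (x i)\<bar>) = (\<Sum>i\<in>R. c i * (\<Sum>q\<in>Q. \<bar>pair (a q) (x i)\<bar>))"
    by (simp add: sum_distrib_left sum.swap[of _ Q])
  also have "\<dots> \<le> (\<Sum>i\<in>R. c i * (C * \<delta>))"
  proof (rule sum_mono)
    fix i assume iR: "i \<in> R"
    then have "i \<in> G" "i \<notin> A" "\<forall>q\<in>Q. \<not> \<delta> * real (s q) < real (N q i)" unfolding R_def H_def by auto
    then have "(\<Sum>q\<in>Q. \<bar>pair (a q) (x i)\<bar>) \<le> C * \<delta>" using R_bound by (meson not_less)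
    moreover have "0 \<le> c i" using iR RG cpos by blast
    ultimately show "c i * (\<Sum>q\<in>Q. \<bar>pair (a q) (x i)\<bar>) \<le> c i * (C * \<delta>)" by (rule mult_left_mono)
  qed
  also have "\<dots> = C * \<delta> * sum c R" by (simp add: sum_distrib_left mult.commute)
  also have "\<dots> \<le> C * \<delta>"
  proof -
    have "sum c R \<le> sum c G" using RG Gfin cpos by (intro sum_mono2) auto
    then have "sum c R \<le> 1" using csum by linarith
    moreover have "0 \<le> C * \<delta>" using Cnn dpos by simp
    ultimately show ?thesis by (simp add: mult_left_le)
  qed
  finally have main: "(\<Sum>q\<in>Q. \<bar>\<Sum>i\<in>G. P q i\<bar>) \<le> C * sum c A + C * sum c H + C * \<delta>" by simp
  have "C * sum c A \<le> C * (2 * \<epsilon>)" using weight_A Cnn by (rule mult_left_mono)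
  moreover have "C * sum c H \<le> C * (2 / \<delta> * \<epsilon>)" using weight_H Cnn by (rule mult_left_mono)
  ultimately show ?thesis using main unfolding P_def by linarith
qed

end



lemma blockseq_mn_mono:
  assumes "blockseq x" "i < i'"
  shows "Min (supp (x i)) < Min (supp (x i'))"
proof -
  have fin: "finite (supp (x k))" and ne: "supp (x k) \<noteq> {}" for k using assms(1) unfolding blockseq_def by auto
  have "setless (supp (x i)) (supp (x i'))"
    by (rule chain_setless[OF _ _ assms(2)]) (use assms(1) ne in \<open>auto simp: blockseq_def\<close>)
  then show ?thesis using fin ne unfolding setless_def by (meson Min_in)
qed

lemma min_ge_index:
  assumes "\<And>q. blk (a q) (a (Suc q))" "\<And>q. finite (supp (a q)) \<and> supp (a q) \<noteq> {}"
  shows "q \<le> Min (supp (a q))"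
proof (induction q)
  case 0 then show ?case by simp
next
  case (Suc q)
  have "Min (supp (a q)) \<in> supp (a q)" "Min (supp (a (Suc q))) \<in> supp (a (Suc q))"
    using assms(2) by auto
  then have "Min (supp (a q)) < Min (supp (a (Suc q)))"
    using assms(1)[of q] unfolding blk_def setless_def by blast
  then show ?case using Suc by simp
qed

theorem corollary1:
  fixes \<xi> :: ord and xs :: "nat \<Rightarrow> ord"
    and x y :: "nat \<Rightarrow> nat \<Rightarrow> real" and F :: "nat \<Rightarrow> nat set"
    and c :: "nat \<Rightarrow> real" and \<epsilon> :: "nat \<Rightarrow> real"
  assumes "ole (OS OZ) \<xi>"
    and "valid (OL xs)"
    and "oeq (OL xs) (oexpw \<xi>)"
    and "blockseq x"
    and "\<exists>C. \<forall>k. xnorm (Wset (schreier (OL xs))) (x k) \<le> C"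
    and "\<forall>k. finite (F k) \<and> F k \<noteq> {}"
    and "\<forall>k. setless (F k) (F (Suc k))"
    and "\<forall>k. y k = (\<lambda>j. \<Sum>i\<in>F k. c i * x i j)"
    and "\<forall>k. scc (schreier (xs (Suc k))) (schreier (xs k)) (\<epsilon> k) x (F k) c"
    and "\<forall>k. \<epsilon> k > 0"
    and "\<epsilon> \<longlonglongrightarrow> 0"
  shows "alpha_index_zero (Wset (schreier (OL xs))) xs y"
proof -
  note valid = assms(2) and xblk = assms(4) and Ffin = assms(6) and yeq = assms(8)
    and sccA = assms(9) and eps0 = assms(11)
  define SF where "SF = schreier (OL xs)"
  define W where "W = Wset SF"
  obtain C0 where C0: "\<forall>k. xnorm W (x k) \<le> C0" using assms(5) unfolding W_def SF_def by blast
  define C where "C = max C0 0"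
  have Cnn: "C \<ge> 0" unfolding C_def by simp
  have xC: "\<bar>pair f (x k)\<bar> \<le> C" if "f \<in> Wset SF" for k f
  proof -
    have "\<bar>pair f (x k)\<bar> \<le> C0" using pair_le_xnorm[OF that, of "x k"] C0 unfolding W_def by (meson order_trans)
    then show ?thesis unfolding C_def by linarith
  qed
  define mn where "mn i = Min (supp (x i))" for i
  have mn_mono: "i < i' \<Longrightarrow> mn i < mn i'" for i i' unfolding mn_def using blockseq_mn_mono[OF xblk] .
  have mn_inj: "inj_on mn S" for S by (rule inj_onI) (metis mn_mono linorder_neqE_nat less_irrefl)
  have creidx: "(\<Sum>p\<in>mn ` I. \<Sum>k\<in>{k\<in>G. Min (supp (x k)) = p}. c k) = sum c I"
    if "I \<subseteq> G" for I G
  proof -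
    have "(\<Sum>p\<in>mn ` I. \<Sum>k\<in>{k\<in>G. Min (supp (x k)) = p}. c k) = (\<Sum>i\<in>I. \<Sum>k\<in>{k\<in>G. Min (supp (x k)) = mn i}. c k)"
      using sum.reindex[OF mn_inj[of I]] by simp
    also have "\<dots> = sum c I"
    proof (rule sum.cong[OF refl])
      fix i assume "i \<in> I"
      then have "{k\<in>G. Min (supp (x k)) = mn i} = {i}" using that mn_inj[of UNIV] unfolding inj_on_def mn_def by auto
      then show "(\<Sum>k\<in>{k\<in>G. Min (supp (x k)) = mn i}. c k) = c i" by simp
    qed
    finally show ?thesis .
  qed
  show ?thesis
    unfolding alpha_index_zero_def W_def[symmetric] SF_def[symmetric]
  proof (intro allI impI)
    fix n :: nat and a :: "nat \<Rightarrow> nat \<Rightarrow> real" and s :: "nat \<Rightarrow> nat" and Fa :: "nat \<Rightarrow> nat set" and mm :: "nat \<Rightarrow> nat"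
    assume H: "vfg W a s \<and> (\<forall>k. finite (Fa k)) \<and> (\<forall>k l. k < l \<longrightarrow> setless (Fa k) (Fa l)) \<and>
       (\<forall>k. (\<lambda>q. Min (supp (a q))) ` Fa k \<in> schreier (xs n)) \<and> strict_mono mm"
    then have vfg: "vfg W a s" and Fafin: "\<And>k. finite (Fa k)"
      and Fasl: "\<And>k l. k < l \<Longrightarrow> setless (Fa k) (Fa l)"
      and FaS: "\<And>k. (\<lambda>q. Min (supp (a q))) ` Fa k \<in> schreier (xs n)" and mmono: "strict_mono mm"
      by auto
    from vfg have avg: "\<And>q. avg_in W (a q) (s q)" and ablk: "\<And>q. blk (a q) (a (Suc q))"
      and smono: "strict_mono s" and smax: "\<And>q. Max (supp (a q)) < s (Suc q)"
      unfolding vfg_def by auto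
    define fs where "fs q = (SOME fs. avg_ok fs (s q) \<and> set fs \<subseteq> W \<and> a q = avgvec fs (s q))" for q
    have fsprop: "avg_ok (fs q) (s q) \<and> set (fs q) \<subseteq> W \<and> a q = avgvec (fs q) (s q)" for q
      unfolding fs_def using avg[of q] unfolding avg_in_def by (rule someI_ex)
    have aW: "a q \<in> W" for q using fsprop[of q] unfolding W_def by (auto intro: Wset.average)
    have aprops: "finite (supp (a q)) \<and> supp (a q) \<noteq> {}" for q
      using W_props[OF aW[unfolded W_def]] unfolding props_def by blast
    have mq: "q \<le> Min (supp (a q))" for q by (rule min_ge_index[where a=a]) (use ablk aprops in auto)
    show "(\<lambda>k. \<Sum>q\<in>Fa k. \<bar>pair (a q) (y (mm k))\<bar>) \<longlonglongrightarrow> 0"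
    proof (rule LIMSEQ_I)
      fix r :: real assume r: "0 < r"
      define \<delta> where "\<delta> = r / (4 * (C + 1))"
      have dpos: "\<delta> > 0" unfolding \<delta>_def using r Cnn by simp
      define e0 where "e0 = r / (4 * (C + 1) * (2 + 2 / \<delta>))"
      have d2: "0 < 2 / \<delta>" using dpos by simp
      have d3: "0 < 2 + 2 / \<delta>" using d2 by linarith
      have "0 < C + 1" using Cnn by linarith
      then have "0 < 4 * (C + 1)" by simp
      from this d3 have "0 < (4 * (C + 1)) * (2 + 2 / \<delta>)" by (rule mult_pos_pos)
      then have e0pos: "e0 > 0" unfolding e0_def using r by simp
      define N0 where "N0 = Suc n + nat \<lceil>1 / \<delta>\<rceil>"
      define B where "B = {k. \<exists>q\<in>Fa k. q < N0}"
      define h where "h k = (SOME q. q \<in> Fa k \<and> q < N0)" for k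
      have hB: "h k \<in> Fa k \<and> h k < N0" if "k \<in> B" for k
        using that unfolding B_def h_def by (metis (mono_tags, lifting) mem_Collect_eq someI_ex)
      have "inj_on h B"
      proof (rule inj_onI)
        fix k l assume kl: "k \<in> B" "l \<in> B" "h k = h l"
        show "k = l"
        proof (rule ccontr)
          assume "k \<noteq> l"
          then have "k < l \<or> l < k" by arith
          then show False using Fasl hB[OF kl(1)] hB[OF kl(2)] kl(3) unfolding setless_def by (metis less_irrefl)
        qed
      qed
      moreover have "h ` B \<subseteq> {..<N0}" using hB by auto
      ultimately have "finite B" by (meson finite_lessThan finite_subset inj_on_finite)
      then obtain K1 where K1: "\<forall>k\<in>B. k < K1" unfolding finite_nat_set_iff_bounded by blast
      have "(\<epsilon> \<circ> mm) \<longlonglongrightarrow> 0" using LIMSEQ_subseq_LIMSEQ[OF eps0 mmono] .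
      from LIMSEQ_D[OF this e0pos] obtain K2 where K2: "\<forall>k\<ge>K2. norm ((\<epsilon> \<circ> mm) k - 0) < e0" by blast
      show "\<exists>no. \<forall>k\<ge>no. norm ((\<Sum>q\<in>Fa k. \<bar>pair (a q) (y (mm k))\<bar>) - 0) < r"
      proof (intro exI allI impI)
        fix k assume k: "max (max K1 K2) n \<le> k"
        define j where "j = mm k"
        have kj: "k \<le> j" unfolding j_def using seq_suble[OF mmono] .
        have qbig: "N0 \<le> q" if "q \<in> Fa k" for q
        proof (rule ccontr)
          assume "\<not> N0 \<le> q"
          then have "q < N0" by simp
          then have "k \<in> B" using that unfolding B_def by blast
          then show False using K1 k by auto
        qed
        have ej: "\<epsilon> j < e0" using K2 k unfolding j_def by auto
        have sccj: "scc (schreier (xs (Suc j))) (schreier (xs j)) (\<epsilon> j) x (F j) c" using sccA by blast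
        then have cpos: "\<And>i. i \<in> F j \<Longrightarrow> c i \<ge> 0"
          and bs: "basic_scc (schreier (xs (Suc j))) (schreier (xs j)) (\<epsilon> j) (mn ` F j)
               (\<lambda>p. \<Sum>k\<in>{k\<in>F j. Min (supp (x k)) = p}. c k)"
          unfolding scc_def mn_def[abs_def] by auto
        have csum: "sum c (F j) \<le> 1" using bs creidx[of "F j" "F j"] unfolding basic_scc_def by simp
        have chain: "schreier (xs n) \<subseteq> schreier (xs j)" using sch_chain[OF valid] k kj by simp
        interpret core SF x C a s fs "Fa k" "F j" c "xs n" "\<epsilon> j" \<delta>
        proof
          show "blockseq x" by (rule xblk)
          show "\<bar>pair f (x k')\<bar> \<le> C" if "f \<in> Wset SF" for k' f using xC[OF that] .
          show "avg_ok (fs q) (s q) \<and> set (fs q) \<subseteq> Wset SF" for q using fsprop[of q] unfolding W_def by blast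
          show "a q = avgvec (fs q) (s q)" for q using fsprop[of q] by blast
          show "blk (a q) (a (Suc q))" for q by (rule ablk)
          show "strict_mono s" by (rule smono)
          show "Max (supp (a q)) < s (Suc q)" for q by (rule smax)
          show "finite (Fa k)" by (rule Fafin)
          show "(\<lambda>q. Min (supp (a q))) ` Fa k \<in> schreier (xs n)" by (rule FaS)
          show "(\<lambda>q. Min (supp (a q))) ` Fa k \<in> SF"
          proof -
            have "(\<lambda>q. Min (supp (a q))) ` Fa k = {} \<or> Suc n \<le> Min ((\<lambda>q. Min (supp (a q))) ` Fa k)"
            proof (cases "Fa k = {}")
              case False
              have "Suc n \<le> Min (supp (a q))" if "q \<in> Fa k" for q
                using qbig[OF that] mq[of q] unfolding N0_def by linarith
              then show ?thesis using False Fafin[of k] by simp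
            qed simp
            then show ?thesis unfolding SF_def using FaS[of k] by auto
          qed
          show "finite (F j)" using Ffin by blast
          show "\<And>i. i \<in> F j \<Longrightarrow> c i \<ge> 0" by (rule cpos)
          show "sum c (F j) \<le> 1" by (rule csum)
          show "sum c I < \<epsilon> j" if "I \<subseteq> F j" "(\<lambda>i. Min (supp (x i))) ` I \<in> schreier (xs n)" for I
          proof -
            have I1: "mn ` I \<in> schreier (xs j)" using that(2) chain unfolding mn_def[abs_def] by blast
            have "mn ` I \<inter> mn ` F j = mn ` I" using that(1) by blast
            then have "(\<Sum>p\<in>mn ` I. \<Sum>k\<in>{k\<in>F j. Min (supp (x k)) = p}. c k) < \<epsilon> j"
              using bs I1 unfolding basic_scc_def by metis
            then show ?thesis using creidx[OF that(1)] by simp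
          qed
          show "\<delta> > 0" by (rule dpos)
          show "1 \<le> \<delta> * real (s q)" if "q \<in> Fa k" for q
          proof -
            have "real q \<ge> 1 / \<delta>" using qbig[OF that] unfolding N0_def by linarith
            moreover have "real (s q) \<ge> real q" using seq_suble[OF smono] by simp
            ultimately have "real (s q) \<ge> 1 / \<delta>" by linarith
            then show ?thesis using dpos by (simp add: divide_le_eq mult.commute)
          qed
          show "C \<ge> 0" by (rule Cnn)
        qed
        have pe: "pair (a q) (y j) = (\<Sum>i\<in>F j. c i * pair (a q) (x i))" for q
          using yeq pair_lin_x[of "F j" x "a q" c] Ffin xblk unfolding blockseq_def by auto
        have bound: "(\<Sum>q\<in>Fa k. \<bar>pair (a q) (y j)\<bar>) \<le> C * (2 * \<epsilon> j) + C * (2 / \<delta> * \<epsilon> j) + C * \<delta>"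
          using core_bound unfolding pe .
        have "C * (2 * \<epsilon> j) + C * (2 / \<delta> * \<epsilon> j) = C * (2 + 2 / \<delta>) * \<epsilon> j" by (simp add: algebra_simps)
        also have "\<dots> \<le> (C + 1) * (2 + 2 / \<delta>) * e0"
        proof -
          have ejp: "0 \<le> \<epsilon> j" using assms(10) less_imp_le by blast
          have p: "0 \<le> 2 + 2 / \<delta>" using d3 by linarith
          have "C * (2 + 2 / \<delta>) \<le> (C + 1) * (2 + 2 / \<delta>)" using p by (simp add: mult_right_mono)
          moreover have "C * (2 + 2 / \<delta>) \<ge> 0" using Cnn p by simp
          ultimately show ?thesis using ej ejp by (meson mult_mono less_imp_le order_trans mult_nonneg_nonneg p Cnn add_nonneg_nonneg zero_le_one)
        qed
        also have "\<dots> = r / 4"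
        proof -
          have gen: "D \<noteq> 0 \<Longrightarrow> D * (r / (4 * D)) = r / 4" for D :: real by (simp add: field_simps)
          have nz: "(C + 1) * (2 + 2 / \<delta>) \<noteq> 0" using \<open>0 < C + 1\<close> d3 by simp
          have eq: "4 * (C + 1) * (2 + 2 / \<delta>) = 4 * ((C + 1) * (2 + 2 / \<delta>))" by (simp only: mult.assoc)
          from gen[OF nz] show ?thesis unfolding e0_def eq .
        qed
        finally have b1: "C * (2 * \<epsilon> j) + C * (2 / \<delta> * \<epsilon> j) \<le> r / 4" .
        have b2: "C * \<delta> \<le> r / 4"
        proof -
          have "C * \<delta> \<le> (C + 1) * \<delta>" using dpos by simp
          also have "\<dots> = r / 4" unfolding \<delta>_def using Cnn by (simp add: field_simps)
          finally show ?thesis .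
        qed
        have nn: "0 \<le> (\<Sum>q\<in>Fa k. \<bar>pair (a q) (y (mm k))\<bar>)" by (simp add: sum_nonneg)
        show "norm ((\<Sum>q\<in>Fa k. \<bar>pair (a q) (y (mm k))\<bar>) - 0) < r"
          using bound b1 b2 nn r unfolding j_def by simp
      qed
    qed
  qed
qed


end
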